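(* Let $\boldsymbol{H}\in\mathbb{R}^{n\times m}$ with $\boldsymbol{H}\neq 0$, $\boldsymbol{x}\in\mathbb{R}^n$, and $\mathcal{E}(\boldsymbol{y})=\|\boldsymbol{x}-\boldsymbol{H}\boldsymbol{y}\|_2^2$ for $\boldsymbol{y}\in\mathbb{R}^m$. Let $\boldsymbol{y}^{t-1}\in\mathbb{R}^m$ be a nonzero vector with nonnegative entries, and set $\kappa=\|\boldsymbol{y}^{t-1}\|_\infty$. Suppose $\alpha$ satisfies $$0\le\alpha\le \frac{2}{\kappa\|\boldsymbol{H}\|_2^2}-1,$$ where $\|\boldsymbol{H}\|_2$ is the spectral norm. Define $$\boldsymbol{y}^t=\boldsymbol{y}^{t-1}\odot SSO_\alpha\big(\nabla\mathcal{E}(\boldsymbol{y}^{t-1})\big).$$ Then $\mathcal{E}(\boldsymbol{y}^t)\le\mathcal{E}(\boldsymbol{y}^{t-1})$.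
   Context: $\sigma(c)=\frac{1}{1+e^{-c}}$ denotes the logistic sigmoid. The Sliding Sigmoid Operator with sliding parameter $\alpha\in\mathbb{R}$ is the function $SSO_\alpha:\mathbb{R}\to\mathbb{R}$, $SSO_\alpha(z)=2\sigma(-z-\alpha)+2\sigma(\alpha)-1$; applied to a vector it acts entrywise. $\odot$ denotes the entrywise (Hadamard) product. Here $\nabla\mathcal{E}(\boldsymbol{y})=2\boldsymbol{H}^\top(\boldsymbol{H}\boldsymbol{y}-\boldsymbol{x})$. *)

theory Defs
  imports "HOL-Analysis.Analysis"
begin

definition sigmoid :: "real \<Rightarrow> real" where
  "sigmoid c = 1 / (1 + exp (- c))"

definition SSO :: "real \<Rightarrow> real \<Rightarrow> real" where
  "SSO \<alpha> z = 2 * sigmoid (- z - \<alpha>) + 2 * sigmoid \<alpha> - 1"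

definition SSO_vec :: "real \<Rightarrow> real ^ 'm \<Rightarrow> real ^ 'm" where
  "SSO_vec \<alpha> z = (\<chi> i. SSO \<alpha> (z $ i))"

definition hadamard :: "real ^ 'm \<Rightarrow> real ^ 'm \<Rightarrow> real ^ 'm" where
  "hadamard u v = (\<chi> i. u $ i * v $ i)"

definition spectral_norm :: "real ^ 'm ^ 'n \<Rightarrow> real" where
  "spectral_norm H = onorm (\<lambda>v. H *v v)"

definition inf_norm :: "real ^ 'm \<Rightarrow> real" where
  "inf_norm y = Max (range (\<lambda>i. \<bar>y $ i\<bar>))"

definition energy :: "real ^ 'm ^ 'n \<Rightarrow> real ^ 'n \<Rightarrow> real ^ 'm \<Rightarrow> real" where
  "energy H x y = (norm (x - H *v y))\<^sup>2"

definition grad_energy :: "real ^ 'm ^ 'n \<Rightarrow> real ^ 'n \<Rightarrow> real ^ 'm \<Rightarrow> real ^ 'm" where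
  "grad_energy H x y = 2 *\<^sub>R (transpose H *v (H *v y - x))"

end

theory Submission imports Defs begin
lemma pos1: "0 < 1 + exp (- t::real)" by (smt (verit) exp_gt_zero)
lemma sig_d: "((\<lambda>t. 1 / (1 + exp (- t))) has_real_derivative exp (-t) / (1 + exp (-t))^2) (at t)"
  using pos1[of t] by (auto intro!: derivative_eq_intros simp: power2_eq_square field_simps)
lemma sig_db: "exp (-t) / (1 + exp (-t))^2 \<le> (1/4::real)"
proof -
  have "0 \<le> (1 - exp(-t))^2" by simp
  then have "4 * exp (-t) \<le> (1 + exp (-t))^2" 
    by (simp add: power2_eq_square algebra_simps)
  then show ?thesis using pos1[of t] by (simp add: divide_le_eq)
qed
lemma sig_mono: "a \<le> b \<Longrightarrow> 1 / (1 + exp (- a)) \<le> 1 / (1 + exp (- (b::real)))"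
  by (rule DERIV_nonneg_imp_nondecreasing[of a b], assumption, rule exI, rule conjI, rule sig_d, 
      simp add: pos1 less_imp_le)
lemma sig_lip: "a \<le> b \<Longrightarrow> 1 / (1 + exp (- (b::real))) - 1 / (1 + exp (- a)) \<le> (b - a) / 4"
proof -
  assume ab: "a \<le> b"
  have "(\<lambda>t. t/4 - 1 / (1 + exp (- t))) a \<le> (\<lambda>t. t/4 - 1 / (1 + exp (- t))) b"
  proof (rule DERIV_nonneg_imp_nondecreasing[OF ab])
    fix x show "\<exists>y. ((\<lambda>t. t/4 - 1 / (1 + exp (- t))) has_real_derivative y) (at x) \<and> 0 \<le> y"
    proof -
      have d4: "((\<lambda>t. t/4) has_real_derivative 1/4) (at x)"
        by (auto intro!: derivative_eq_intros)
      show ?thesis using DERIV_diff[OF d4 sig_d[of x]] sig_db[of x] by auto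
    qed
  qed
  then show ?thesis by simp
qed
lemma tr: fixes H :: "real ^ 'm ^ 'n"
  shows "r \<bullet> (H *v d) = (transpose H *v r) \<bullet> d"
proof -
  have "r \<bullet> (H *v d) = (\<Sum>i\<in>UNIV. \<Sum>j\<in>UNIV. r $ i * (H $ i $ j * d $ j))"
    by (simp add: inner_vec_def matrix_vector_mult_def sum_distrib_left)
  also have "\<dots> = (\<Sum>j\<in>UNIV. \<Sum>i\<in>UNIV. r $ i * (H $ i $ j * d $ j))"
    by (rule sum.swap)
  also have "\<dots> = (transpose H *v r) \<bullet> d"
    by (simp add: inner_vec_def matrix_vector_mult_def transpose_def sum_distrib_left mult_ac)
  finally show ?thesis .
qed

lemma sig_neg: "sigmoid a + sigmoid (-a) = 1"
proof -
  have "exp (-a) * exp a = 1" by (simp add: exp_minus)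
  then show ?thesis unfolding sigmoid_def using pos1[of a] pos1[of "-a"]
    by (simp add: field_simps)
qed

lemma phi_facts:
  fixes z \<alpha> :: real
  defines "p \<equiv> 2 * (sigmoid (-\<alpha>) - sigmoid (-z-\<alpha>))"
  shows "0 \<le> z * p" "p^2 \<le> z * p / 2"
proof -
  have A: "0 \<le> z * p \<and> p^2 \<le> z * p / 2"
  proof (cases "0 \<le> z")
    case True
    have a: "-z-\<alpha> \<le> -\<alpha>" using True by simp
    have m: "0 \<le> p" using sig_mono[OF a] by (simp add: p_def sigmoid_def)
    have l: "p \<le> z/2" using sig_lip[OF a] by (simp add: p_def sigmoid_def)
    have "p * p \<le> (z/2) * p" using mult_right_mono[OF l m] .
    then show ?thesis using True m by (simp add: power2_eq_square)
  next
    case False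
    have a: "-\<alpha> \<le> -z-\<alpha>" using False by simp
    have m: "p \<le> 0" using sig_mono[OF a] by (simp add: p_def sigmoid_def)
    have l: "z/2 \<le> p" using sig_lip[OF a] by (simp add: p_def sigmoid_def)
    have "p * p \<le> (z/2) * p" using mult_right_mono_neg[OF l m] .
    then show ?thesis using False m by (simp add: power2_eq_square mult_nonpos_nonpos)
  qed
  then show "0 \<le> z * p" "p^2 \<le> z * p / 2" by auto
qed

theorem theorem2:
  fixes H :: "real ^ 'm ^ 'n" and x :: "real ^ 'n" and y :: "real ^ 'm" and \<alpha> :: real
  assumes "H \<noteq> 0"
    and "y \<noteq> 0"
    and "\<forall>i. y $ i \<ge> 0"
    and "0 \<le> \<alpha>"
    and "\<alpha> \<le> 2 / (inf_norm y * (spectral_norm H)\<^sup>2) - 1"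
  shows "energy H x (hadamard y (SSO_vec \<alpha> (grad_energy H x y))) \<le> energy H x y"
proof -
  define g where "g = grad_energy H x y"
  define r where "r = x - H *v y"
  define K where "K = inf_norm y"
  define S where "S = spectral_norm H"
  define p where "p = (\<lambda>i. 2 * (sigmoid (-\<alpha>) - sigmoid (-(g$i)-\<alpha>)))"
  define d where "d = hadamard y (SSO_vec \<alpha> g) - y"
  have di: "d $ i = - (y $ i * p i)" for i
  proof -
    have s: "SSO \<alpha> (g $ i) = 1 - p i"
      using sig_neg[of \<alpha>] by (simp add: SSO_def p_def)
    show ?thesis by (simp add: d_def hadamard_def SSO_vec_def s right_diff_distrib)
  qed
  have yK: "y $ i \<le> K" for i
  proof -
    have "\<bar>y $ i\<bar> \<le> K" unfolding K_def inf_norm_def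
      by (rule Max_ge) (auto intro: finite_imageI)
    then show ?thesis by simp
  qed
  have K0: "0 \<le> K" using yK assms(3) by (meson order_trans)
  have SK: "S^2 * K \<le> 2"
  proof (cases "K * S^2 = 0")
    case True then show ?thesis by (auto simp add: mult.commute)
  next
    case False
    then have pos: "0 < K * S^2" using K0 by (simp add: order_less_le)
    have "0 \<le> 2 / (K * S^2) - 1" using assms(4,5) unfolding K_def S_def by linarith
    then have "1 \<le> 2 / (K * S^2)" by simp
    then have "K * S^2 \<le> 2" using pos by (simp add: le_divide_eq)
    then show ?thesis by (simp add: mult.commute)
  qed
  have trm: "S^2 * (d $ i)^2 + g $ i * d $ i \<le> 0" for i
  proof -
    have f1: "0 \<le> g $ i * p i" "(p i)^2 \<le> g $ i * p i / 2"
      using phi_facts[where z="g $ i" and \<alpha>=\<alpha>] by (simp_all add: p_def)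
    have yi: "0 \<le> y $ i" using assms(3) by simp
    have "S^2 * y $ i \<le> 2" using SK mult_left_mono[OF yK[of i], of "S^2"] by simp
    then have "S^2 * y $ i * (p i)^2 \<le> 2 * (p i)^2" by (simp add: mult_right_mono)
    also have "\<dots> \<le> g $ i * p i" using f1 by simp
    finally have "S^2 * y $ i * (p i)^2 - g $ i * p i \<le> 0" by simp
    then have "y $ i * (S^2 * y $ i * (p i)^2 - g $ i * p i) \<le> 0"
      using yi by (simp add: mult_nonneg_nonpos)
    then show ?thesis by (simp add: di power2_eq_square algebra_simps)
  qed
  have yd: "hadamard y (SSO_vec \<alpha> g) = y + d" by (simp add: d_def)
  have nd: "(norm (a - b))^2 = (norm a)^2 - 2*(a \<bullet> b) + (norm b)^2" for a b :: "real ^ 'n"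
    by (simp add: power2_norm_eq_inner inner_diff_left inner_diff_right inner_commute)
  have xr: "x - H *v (y + d) = r - H *v d"
    by (simp add: r_def matrix_vector_right_distrib)
  have e1: "energy H x (y + d) = (norm r)^2 - 2 * (r \<bullet> (H *v d)) + (norm (H *v d))^2"
    unfolding energy_def xr by (rule nd)
  have gd: "g \<bullet> d = - 2 * (r \<bullet> (H *v d))"
    unfolding g_def grad_energy_def tr r_def
    by (simp add: matrix_vector_right_distrib inner_diff_left algebra_simps)
  have nb: "norm (H *v d) \<le> S * norm d"
    unfolding S_def spectral_norm_def by (rule onorm[OF matrix_vector_mul_bounded_linear])
  have S0: "0 \<le> S"
    unfolding S_def spectral_norm_def by (rule onorm_pos_le[OF matrix_vector_mul_bounded_linear])
  have nb2: "(norm (H *v d))^2 \<le> S^2 * (norm d)^2"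
    using power_mono[OF nb, of 2] by (simp add: power_mult_distrib)
  have nd2: "(norm d)^2 = (\<Sum>i\<in>UNIV. (d $ i)^2)"
    unfolding power2_norm_eq_inner by (simp add: inner_vec_def power2_eq_square)
  have "S^2 * (norm d)^2 + g \<bullet> d = (\<Sum>i\<in>UNIV. S^2 * (d $ i)^2 + g $ i * d $ i)"
    unfolding nd2 by (simp add: inner_vec_def sum.distrib sum_distrib_left)
  also have "\<dots> \<le> 0" by (rule sum_nonpos) (use trm in auto)
  finally have "S^2 * (norm d)^2 + g \<bullet> d \<le> 0" .
  then have "energy H x (y + d) \<le> (norm r)^2" using e1 gd nb2 by linarith
  then show ?thesis using yd g_def by (simp add: energy_def r_def)
qed

end
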